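(* Let $U\subset X$ range over regular regions and, for each such $U$, let $v$ range over the admissible variations with respect to $U$. Then $\phi\in\Lambda^k_h$ satisfies the localized discrete Euler--Lagrange equations $$0=\delta S_U[\phi]\cdot v=\big(\partial_2\mathcal{L}(j^1\phi),v\big)_{L^2\Lambda^k(U)}+\big(\partial_3\mathcal{L}(j^1\phi),dv\big)_{L^2\Lambda^{k+1}(U)}$$ for all regular $U$ and all admissible $v$ if and only if $\phi$ satisfies the discrete Euler--Lagrange equations $$0=\big(\partial_2\mathcal{L}(j^1\phi),v\big)_{L^2\Lambda^k(X)}+\big(\partial_3\mathcal{L}(j^1\phi),dv\big)_{L^2\Lambda^{k+1}(X)}\quad\text{for all } v\in\mathring{\Lambda}^k_h .$$
   Context: $X$ is a bounded $(n+1)$-dimensional polyhedral domain with a Riemannian or Lorentzian metric (giving $L^2$ inner products on forms) and a finite element triangulation $\mathcal{T}_h$. $H\Lambda^m(X)$ denotes square-integrable $m$-forms with square-integrable exterior derivative. A Lagrangian density $\mathcal{L}$ assigns to $(x,\phi,\psi)$, $\phi\in H\Lambda^k$, $\psi\in dH\Lambda^k$, an $(n+1)$-form; $j^1\phi=(x,\phi,d\phi)$; for a region $U$, $S_U[\phi]=\int_U\mathcal{L}(j^1\phi)$. $\partial_2\mathcal{L}(j^1\phi)\in L^2\Lambda^k$ and $\partial_3\mathcal{L}(j^1\phi)\in L^2\Lambda^{k+1}$ denote the Riesz representatives of the variations of $\mathcal{L}$ with respect to its second and third arguments. $\Lambda^k_h\subset H\Lambda^k(X)$ is a finite element space with a basis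 of locally supported shape functions associated to nodes of the mesh, and $\mathring{\Lambda}^k_h$ is the subspace of elements with vanishing trace on $\partial X$. A node $i$ is an interior point of a region $U$ if $U$ contains all simplices touching $i$; $\bar U$ is the union of all simplices touching interior nodes of $U$; $U$ is regular if $U=\bar U$. The admissible variations with respect to a regular $U$ are the $v\in\mathring{\Lambda}^k_h$ with $v|_U\in\mathring{\Lambda}^k_h(U)$ (vanishing trace on $\partial U$). *)

theory Defs
  imports "HOL-Analysis.Analysis"
begin

text \<open>Simplices of the triangulation: a finite set T of type 's.
  Nodes: a finite set N of type 'n; touches i s means node i touches simplex s.
  B \<subseteq> N: nodes lying on the boundary of X (their degrees of freedom are
  the ones killed by the vanishing-trace condition on the boundary of X).
  Forms of degree k live in the real vector space 'a (L2 k-forms), forms of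
  degree k+1 in 'b; d is the exterior derivative.
  ip0 s, ip1 s: L2 inner products of k-forms, (k+1)-forms over simplex s.
  A region is a set of simplices; L2 products over a region are sums over its
  simplices (simplices overlap in measure zero only).\<close>

definition interior_node :: "('n \<Rightarrow> 's \<Rightarrow> bool) \<Rightarrow> 's set \<Rightarrow> 's set \<Rightarrow> 'n \<Rightarrow> bool" where
  "interior_node touches T U i \<longleftrightarrow> (\<forall>s\<in>T. touches i s \<longrightarrow> s \<in> U)"

definition region_closure :: "('n \<Rightarrow> 's \<Rightarrow> bool) \<Rightarrow> 'n set \<Rightarrow> 's set \<Rightarrow> 's set \<Rightarrow> 's set" where
  "region_closure touches N T U =
     {s\<in>T. \<exists>i\<in>N. interior_node touches T U i \<and> touches i s}"

definition regular_region :: "('n \<Rightarrow> 's \<Rightarrow> bool) \<Rightarrow> 'n set \<Rightarrow> 's set \<Rightarrow> 's set \<Rightarrow> bool" where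
  "regular_region touches N T U \<longleftrightarrow> U \<subseteq> T \<and> U = region_closure touches N T U"

definition fe_fun :: "'n set \<Rightarrow> ('n \<Rightarrow> 'a::real_vector) \<Rightarrow> ('n \<Rightarrow> real) \<Rightarrow> 'a" where
  "fe_fun N basis c = (\<Sum>i\<in>N. c i *\<^sub>R basis i)"

definition fe_space :: "'n set \<Rightarrow> ('n \<Rightarrow> 'a::real_vector) \<Rightarrow> 'a set" where
  "fe_space N basis = {fe_fun N basis c | c. True}"

definition fe_space0 :: "'n set \<Rightarrow> 'n set \<Rightarrow> ('n \<Rightarrow> 'a::real_vector) \<Rightarrow> 'a set" where
  "fe_space0 N B basis = {fe_fun N basis c | c. \<forall>i\<in>B. c i = 0}"

text \<open>Admissible variations with respect to a region U: elements of the
  vanishing-trace space whose restriction to U has vanishing trace on the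
  boundary of U, i.e. whose degrees of freedom at nodes touching U but not
  interior to U (the nodes on the boundary of U) vanish.\<close>
definition admissible ::
  "('n \<Rightarrow> 's \<Rightarrow> bool) \<Rightarrow> 'n set \<Rightarrow> 'n set \<Rightarrow> 's set \<Rightarrow> ('n \<Rightarrow> 'a::real_vector) \<Rightarrow> 's set \<Rightarrow> 'a set" where
  "admissible touches N B T basis U =
     {fe_fun N basis c | c. (\<forall>i\<in>B. c i = 0) \<and>
        (\<forall>i\<in>N. (\<exists>s\<in>U. touches i s) \<and> \<not> interior_node touches T U i \<longrightarrow> c i = 0)}"

definition L2_on :: "('s \<Rightarrow> 'a \<Rightarrow> 'a \<Rightarrow> real) \<Rightarrow> 's set \<Rightarrow> 'a \<Rightarrow> 'a \<Rightarrow> real" where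
  "L2_on ip U u w = (\<Sum>s\<in>U. ip s u w)"

text \<open>First jet of a field (the x-dependence is absorbed in the Lagrangian derivatives).\<close>
definition jet1 :: "('a \<Rightarrow> 'b) \<Rightarrow> 'a \<Rightarrow> 'a \<times> 'b" where
  "jet1 d \<phi> = (\<phi>, d \<phi>)"

end

theory Submission
  imports Defs
begin


lemma expand_fe:
  fixes basis :: "'n \<Rightarrow> 'a::real_vector" and d :: "'a \<Rightarrow> 'b::real_vector"
    and ip0 :: "'s \<Rightarrow> 'a \<Rightarrow> 'a \<Rightarrow> real" and ip1 :: "'s \<Rightarrow> 'b \<Rightarrow> 'b \<Rightarrow> real"
  assumes "linear d" and "\<And>s u. linear (ip0 s u)" and "\<And>s w. linear (ip1 s w)"
  shows "L2_on ip0 U a (fe_fun N basis c) + L2_on ip1 U b (d (fe_fun N basis c))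
       = (\<Sum>i\<in>N. c i * (\<Sum>s\<in>U. ip0 s a (basis i) + ip1 s b (d (basis i))))"
proof -
  have "L2_on ip0 U a (fe_fun N basis c) + L2_on ip1 U b (d (fe_fun N basis c))
     = (\<Sum>s\<in>U. \<Sum>i\<in>N. c i * (ip0 s a (basis i) + ip1 s b (d (basis i))))"
    unfolding L2_on_def fe_fun_def sum.distrib[symmetric]
    by (simp add: real_vector.linear_sum[OF assms(1)] real_vector.linear_sum[OF assms(2)]
        real_vector.linear_sum[OF assms(3)] real_vector.linear_scale[OF assms(1)]
        real_vector.linear_scale[OF assms(2)] real_vector.linear_scale[OF assms(3)]
        sum.distrib distrib_left)
  also have "\<dots> = (\<Sum>i\<in>N. c i * (\<Sum>s\<in>U. ip0 s a (basis i) + ip1 s b (d (basis i))))"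
    by (subst sum.swap) (simp add: sum_distrib_left)
  finally show ?thesis .
qed

theorem mainTheorem1:
  fixes T :: "'s set" and N B :: "'n set" and touches :: "'n \<Rightarrow> 's \<Rightarrow> bool"
    and basis :: "'n \<Rightarrow> 'a::real_vector" and d :: "'a \<Rightarrow> 'b::real_vector"
    and ip0 :: "'s \<Rightarrow> 'a \<Rightarrow> 'a \<Rightarrow> real" and ip1 :: "'s \<Rightarrow> 'b \<Rightarrow> 'b \<Rightarrow> real"
    and dL2 :: "'a \<times> 'b \<Rightarrow> 'a" and dL3 :: "'a \<times> 'b \<Rightarrow> 'b"
    and \<phi> :: 'a
  assumes "finite T" and "finite N" and "B \<subseteq> N"
    and "linear d"
    and "\<And>s u. linear (ip0 s u)" and "\<And>s w. linear (ip1 s w)"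
    and "\<And>i s u w. i \<in> N \<Longrightarrow> s \<in> T \<Longrightarrow> \<not> touches i s \<Longrightarrow>
           ip0 s u (basis i) = 0 \<and> ip1 s w (d (basis i)) = 0"
    and "\<phi> \<in> fe_space N basis"
  shows "(\<forall>U. regular_region touches N T U \<longrightarrow>
            (\<forall>v\<in>admissible touches N B T basis U.
               L2_on ip0 U (dL2 (jet1 d \<phi>)) v + L2_on ip1 U (dL3 (jet1 d \<phi>)) (d v) = 0))
     \<longleftrightarrow> (\<forall>v\<in>fe_space0 N B basis.
               L2_on ip0 T (dL2 (jet1 d \<phi>)) v + L2_on ip1 T (dL3 (jet1 d \<phi>)) (d v) = 0)"

proof -
  note A = assms
  define a where "a = dL2 (jet1 d \<phi>)"
  define b where "b = dL3 (jet1 d \<phi>)"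
  define g where "g = (\<lambda>s i. ip0 s a (basis i) + ip1 s b (d (basis i)))"
  have E: "\<And>U c. L2_on ip0 U a (fe_fun N basis c) + L2_on ip1 U b (d (fe_fun N basis c))
       = (\<Sum>i\<in>N. c i * (\<Sum>s\<in>U. g s i))"
    unfolding g_def by (rule expand_fe[OF A(4) A(5) A(6)])
  have Z: "\<And>i s. i \<in> N \<Longrightarrow> s \<in> T \<Longrightarrow> \<not> touches i s \<Longrightarrow> g s i = 0"
    unfolding g_def using A(7) by simp
  show ?thesis unfolding a_def[symmetric] b_def[symmetric]
  proof
    assume L: "\<forall>U. regular_region touches N T U \<longrightarrow>
            (\<forall>v\<in>admissible touches N B T basis U.
               L2_on ip0 U a v + L2_on ip1 U b (d v) = 0)"
    show "\<forall>v\<in>fe_space0 N B basis. L2_on ip0 T a v + L2_on ip1 T b (d v) = 0"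
    proof
      fix v assume "v \<in> fe_space0 N B basis"
      then obtain c where v: "v = fe_fun N basis c" and cB: "\<forall>i\<in>B. c i = 0"
        unfolding fe_space0_def by blast
      define U0 where "U0 = {s\<in>T. \<exists>i\<in>N. touches i s}"
      have int: "interior_node touches T U0 i" if "i \<in> N" for i
        using that unfolding interior_node_def U0_def by blast
      have reg: "regular_region touches N T U0"
        unfolding regular_region_def region_closure_def
        using int by (auto simp: U0_def interior_node_def)
      have adm: "v \<in> admissible touches N B T basis U0"
        unfolding admissible_def v using cB int by blast
      have "L2_on ip0 U0 a v + L2_on ip1 U0 b (d v) = 0" using L reg adm by blast
      moreover have "\<And>i. i \<in> N \<Longrightarrow> (\<Sum>s\<in>T. g s i) = (\<Sum>s\<in>U0. g s i)"
        by (rule sum.mono_neutral_right) (use A(1) Z in \<open>auto simp: U0_def\<close>)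
      ultimately show "L2_on ip0 T a v + L2_on ip1 T b (d v) = 0"
        unfolding v E by simp
    qed
  next
    assume G: "\<forall>v\<in>fe_space0 N B basis. L2_on ip0 T a v + L2_on ip1 T b (d v) = 0"
    show "\<forall>U. regular_region touches N T U \<longrightarrow>
            (\<forall>v\<in>admissible touches N B T basis U.
               L2_on ip0 U a v + L2_on ip1 U b (d v) = 0)"
    proof (intro allI impI ballI)
      fix U v assume R: "regular_region touches N T U"
        and "v \<in> admissible touches N B T basis U"
      then obtain c where v: "v = fe_fun N basis c" and cB: "\<forall>i\<in>B. c i = 0"
        and cU: "\<forall>i\<in>N. (\<exists>s\<in>U. touches i s) \<and> \<not> interior_node touches T U i \<longrightarrow> c i = 0"
        unfolding admissible_def by blast
      have UT: "U \<subseteq> T" using R unfolding regular_region_def by blast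
      define c' where "c' = (\<lambda>i. if interior_node touches T U i then c i else 0)"
      have "fe_fun N basis c' \<in> fe_space0 N B basis"
        unfolding fe_space0_def c'_def using cB by auto
      hence G0: "(\<Sum>i\<in>N. c' i * (\<Sum>s\<in>T. g s i)) = 0" using G E by metis
      have eq: "c i * (\<Sum>s\<in>U. g s i) = c' i * (\<Sum>s\<in>T. g s i)" if i: "i \<in> N" for i
      proof (cases "interior_node touches T U i")
        case True
        have "(\<Sum>s\<in>T. g s i) = (\<Sum>s\<in>U. g s i)"
          by (rule sum.mono_neutral_right) (use A(1) Z i True UT in \<open>auto simp: interior_node_def\<close>)
        then show ?thesis using True by (simp add: c'_def)
      next
        case False
        show ?thesis
        proof (cases "\<exists>s\<in>U. touches i s")
          case True then show ?thesis using False cU i by (simp add: c'_def)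
        next
          case F2: False
          have "(\<Sum>s\<in>U. g s i) = 0"
            by (rule sum.neutral) (use Z i F2 UT in blast)
          then show ?thesis using False by (simp add: c'_def)
        qed
      qed
      show "L2_on ip0 U a v + L2_on ip1 U b (d v) = 0"
        unfolding v E using G0 eq by (metis (no_types, lifting) sum.cong)
    qed
  qed
qed

end
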